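(* Consider the periodic robust learning MPC scheme described in the context, and assume the stage costs $l_t(z,v)$ are continuous, convex and satisfy $l_t(z,v)\ge 0$. Then at every iteration $j\ge1$ and every $t\in\{0,1,\dots,T-N\}$, the closed-loop cumulative cost $J^j(z_t^j)=\sum_{k=t}^T l_k(z_k^j,v_k^j)$ satisfies $J^j(z_t^j)\le J_{t|t'}^{i,j}(z_{t|t'}^{i,j})$ for every shifted state $z_{t|t'}^{i,j}\in\mathbb{SS}_t^j$ with $z_{t|t'}^{i,j}=z_t^j$. In particular, if $\theta^j\in\mathbb{W}_0^i$ for some $i\in\{0,\dots,j-1\}$, then $J^j(z_0^j)\le J_{0|0}^{i,j}(z_0^j)$.
   Context: Let $T\in\mathbb{N}$ be the period/task length and $N\le T$ the prediction horizon; $\mathbb{N}_a^b=\{a,a+1,\dots,b\}$. For $t\in\mathbb{N}_0^T$ let $A_t\in\mathbb{R}^{n\times n}$, $B_t\in\mathbb{R}^{n\times m}$, $C_t\in\mathbb{R}^{n\times d}$ be given, together with tightened constraint data $\bar F_t,\bar G_t,\bar f_t$ (polytopic constraints $\bar F_t z+\bar G_t v\le \bar f_t$), gains $K_t$ and $\Phi_t=A_t+B_tK_t$. Let $(\theta,t)\mapsto w_{\theta,t}\in\mathbb{R}^d$ be a given (known) parametrized disturbance profile, with parameters $\theta$ ranging in a set $\mathbb{W}_\theta$. Each iteration $j=0,1,2,\dots$ has a parameter $\theta^j\in\mathbb{W}_\theta$, known at iteration $j$, and nominal dynamics $z_{k+1}=A_kz_k+B_kv_k+C_kw_{\theta^j,k}$,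 all iterations starting from $z_0^j=x_s$. Standing assumption: a closed-loop trajectory $\{\mathbf{z}^0,\mathbf{v}^0\}$ of iteration $0$ (parameter $\theta^0$) is given satisfying the nominal dynamics and tightened constraints, and $\mathbb{W}_t^0\supseteq\mathbb{W}_\theta$ for all $t$; at each solved LMPC problem an optimal solution is selected. Shifting: for a past iteration $i$ with recorded closed-loop states $\mathbf{z}^i=[z_0^i,\dots,z_T^i]$, inputs $\mathbf{v}^i=[v_0^i,\dots,v_T^i]$ and parameter $\theta^i$, a parameter $\theta$ and a start time $t$, define $e_{t|t}=0$, $e_{k+1|t}=\Phi_k e_{k|t}+C_k(w_{\theta,k}-w_{\theta^i,k})$, $v_{k|t}=v_k^i+K_ke_{k|t}$, $z_{k|t}=z_k^i+e_{k|t}$ for $k\in\mathbb{N}_t^T$; when $\theta=\theta^j$ these are denoted $z_{k|t}^{i,j},v_{k|t}^{i,j}$. The feasible disturbance set $\mathbb{W}_t^i$ is the set of $\theta$ for which the resulting shifted pairs satisfy $\bar F_k z_{k|t}+\bar G_k v_{k|t}\le \bar f_k$ for all $k\in\mathbb{N}_t^T$. Safe sets and cost-to-go at iteration $j$: $\mathbb{SS}_k^j=\{z_{k|t}^{i,j}: i\in\mathbb{N}_0^{j-1},\ t\in\mathbb{N}_0^k,\ \theta^j\in\mathbb{W}_t^i\}$ (a finite set of points), shifted costs $J_{k|t}^{i,j}(z_{k|t}^{i,j})=\sum_{r=k}^T l_r(z_{r|t}^{i,j},v_{r|t}^{i,j})$, and $Q_k^j(z)=\min\{J_{k|t}^{i,j}: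 i\in\mathbb{N}_0^{j-1}, t\in\mathbb{N}_0^k, \theta^j\in\mathbb{W}_t^i, z_{k|t}^{i,j}=z\}$ if $z\in\mathbb{SS}_k^j$, and $Q_k^j(z)=+\infty$ otherwise. LMPC problem at time $t\in\mathbb{N}_0^{T-N}$ of iteration $j$, given current nominal state $z_t^j$: minimize $\sum_{k=t}^{t+N-1}l_k(z_{k|t},v_{k|t})+Q_{t+N}^j(z_{t+N|t})$ over $v_{t|t},\dots,v_{t+N-1|t}$ subject to $z_{t|t}=z_t^j$, $z_{k+1|t}=A_kz_{k|t}+B_kv_{k|t}+C_kw_{\theta^j,k}$, $\bar F_kz_{k|t}+\bar G_kv_{k|t}\le\bar f_k$ for $k\in\mathbb{N}_t^{t+N-1}$, and $z_{t+N|t}\in\mathbb{SS}_{t+N}^j$. With optimal inputs $v^{j,*}_{k|t}$, the closed-loop input is $v_t^j=v_{t|t}^{j,*}$ if $t+N\le T$ and $v_t^j=v_{t|T-N}^{j,*}$ if $t+N>T$, and $z_{t+1}^j=A_tz_t^j+B_tv_t^j+C_tw_{\theta^j,t}$. The closed-loop $\{\mathbf{z}^j,\mathbf{v}^j\}$ together with $\theta^j$ is recorded and used as historical data for later iterations. *)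

theory Defs
  imports "HOL-Analysis.Analysis"
begin

text \<open>States live in real^'n, inputs in
real^'m, disturbances in real^'d, polytopic constraint rows are indexed by 'c, and the
disturbance-profile parameters theta range over the type 'p.  Vector inequalities on
real^'c are componentwise.\<close>

record ('n, 'm, 'd, 'c, 'p) lmpc_sys =
  sA :: "nat \<Rightarrow> real^'n^'n"
  sB :: "nat \<Rightarrow> real^'m^'n"
  sC :: "nat \<Rightarrow> real^'d^'n"
  sK :: "nat \<Rightarrow> real^'n^'m"
  sF :: "nat \<Rightarrow> real^'n^'c"
  sG :: "nat \<Rightarrow> real^'m^'c"
  sf :: "nat \<Rightarrow> real^'c"
  sl :: "nat \<Rightarrow> real^'n \<Rightarrow> real^'m \<Rightarrow> real"
  sw :: "'p \<Rightarrow> nat \<Rightarrow> real^'d"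
  sT :: nat
  sN :: nat
  sxs :: "real^'n"

definition Phi :: "('n::finite, 'm::finite, 'd::finite, 'c::finite, 'p) lmpc_sys \<Rightarrow> nat \<Rightarrow> real^'n^'n" where
  "Phi S k = sA S k + sB S k ** sK S k"

definition dyn :: "('n::finite, 'm::finite, 'd::finite, 'c::finite, 'p) lmpc_sys \<Rightarrow> 'p \<Rightarrow> nat \<Rightarrow> real^'n \<Rightarrow> real^'m \<Rightarrow> real^'n" where
  "dyn S \<theta> k z v = sA S k *v z + sB S k *v v + sC S k *v sw S \<theta> k"

definition cstr :: "('n::finite, 'm::finite, 'd::finite, 'c::finite, 'p) lmpc_sys \<Rightarrow> nat \<Rightarrow> real^'n \<Rightarrow> real^'m \<Rightarrow> bool" where
  "cstr S k z v \<longleftrightarrow> sF S k *v z + sG S k *v v \<le> sf S k"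

text \<open>Shifting error: shift_err S thi th t d = e_{t+d|t} for past parameter thi and new parameter th.\<close>
primrec shift_err :: "('n::finite, 'm::finite, 'd::finite, 'c::finite, 'p) lmpc_sys \<Rightarrow> 'p \<Rightarrow> 'p \<Rightarrow> nat \<Rightarrow> nat \<Rightarrow> real^'n" where
  "shift_err S thi th t 0 = 0"
| "shift_err S thi th t (Suc d) =
     Phi S (t + d) *v shift_err S thi th t d + sC S (t + d) *v (sw S th (t + d) - sw S thi (t + d))"

definition shz :: "('n::finite, 'm::finite, 'd::finite, 'c::finite, 'p) lmpc_sys \<Rightarrow> (nat \<Rightarrow> real^'n) \<Rightarrow> 'p \<Rightarrow> 'p \<Rightarrow> nat \<Rightarrow> nat \<Rightarrow> real^'n" where
  "shz S zi thi th t k = zi k + shift_err S thi th t (k - t)"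

definition shv :: "('n::finite, 'm::finite, 'd::finite, 'c::finite, 'p) lmpc_sys \<Rightarrow> (nat \<Rightarrow> real^'m) \<Rightarrow> 'p \<Rightarrow> 'p \<Rightarrow> nat \<Rightarrow> nat \<Rightarrow> real^'m" where
  "shv S vi thi th t k = vi k + sK S k *v shift_err S thi th t (k - t)"

definition Wfeas :: "('n::finite, 'm::finite, 'd::finite, 'c::finite, 'p) lmpc_sys \<Rightarrow> (nat \<Rightarrow> real^'n) \<Rightarrow> (nat \<Rightarrow> real^'m) \<Rightarrow> 'p \<Rightarrow> nat \<Rightarrow> 'p set" where
  "Wfeas S zi vi thi t = {th. \<forall>k\<in>{t..sT S}. cstr S k (shz S zi thi th t k) (shv S vi thi th t k)}"

text \<open>Historical data: zs i, vs i, th i are the closed-loop states, inputs and parameter of iteration i.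
  Safe set SS^j_k.\<close>
definition SS :: "('n::finite, 'm::finite, 'd::finite, 'c::finite, 'p) lmpc_sys \<Rightarrow> (nat \<Rightarrow> nat \<Rightarrow> real^'n) \<Rightarrow> (nat \<Rightarrow> nat \<Rightarrow> real^'m) \<Rightarrow> (nat \<Rightarrow> 'p) \<Rightarrow> nat \<Rightarrow> nat \<Rightarrow> (real^'n) set" where
  "SS S zs vs th j k = {shz S (zs i) (th i) (th j) t k | i t. i < j \<and> t \<le> k \<and> th j \<in> Wfeas S (zs i) (vs i) (th i) t}"

definition Jsh :: "('n::finite, 'm::finite, 'd::finite, 'c::finite, 'p) lmpc_sys \<Rightarrow> (nat \<Rightarrow> nat \<Rightarrow> real^'n) \<Rightarrow> (nat \<Rightarrow> nat \<Rightarrow> real^'m) \<Rightarrow> (nat \<Rightarrow> 'p) \<Rightarrow> nat \<Rightarrow> nat \<Rightarrow> nat \<Rightarrow> nat \<Rightarrow> real" where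
  "Jsh S zs vs th i j t k = (\<Sum>r = k..sT S. sl S r (shz S (zs i) (th i) (th j) t r) (shv S (vs i) (th i) (th j) t r))"

text \<open>Cost-to-go Q^j_k (value +infinity outside the safe set: the infimum of the empty set).\<close>
definition Qf :: "('n::finite, 'm::finite, 'd::finite, 'c::finite, 'p) lmpc_sys \<Rightarrow> (nat \<Rightarrow> nat \<Rightarrow> real^'n) \<Rightarrow> (nat \<Rightarrow> nat \<Rightarrow> real^'m) \<Rightarrow> (nat \<Rightarrow> 'p) \<Rightarrow> nat \<Rightarrow> nat \<Rightarrow> real^'n \<Rightarrow> ereal" where
  "Qf S zs vs th j k z =
     (INF p \<in> {(i, t). i < j \<and> t \<le> k \<and> th j \<in> Wfeas S (zs i) (vs i) (th i) t
                        \<and> shz S (zs i) (th i) (th j) t k = z}.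
        ereal (Jsh S zs vs th (fst p) j (snd p) k))"

primrec pred :: "('n::finite, 'm::finite, 'd::finite, 'c::finite, 'p) lmpc_sys \<Rightarrow> 'p \<Rightarrow> real^'n \<Rightarrow> nat \<Rightarrow> (nat \<Rightarrow> real^'m) \<Rightarrow> nat \<Rightarrow> real^'n" where
  "pred S th z t u 0 = z"
| "pred S th z t u (Suc d) = dyn S th (t + d) (pred S th z t u d) (u (t + d))"

definition lmpc_feasible :: "('n::finite, 'm::finite, 'd::finite, 'c::finite, 'p) lmpc_sys \<Rightarrow> (nat \<Rightarrow> nat \<Rightarrow> real^'n) \<Rightarrow> (nat \<Rightarrow> nat \<Rightarrow> real^'m) \<Rightarrow> (nat \<Rightarrow> 'p) \<Rightarrow> nat \<Rightarrow> nat \<Rightarrow> real^'n \<Rightarrow> (nat \<Rightarrow> real^'m) \<Rightarrow> bool" where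
  "lmpc_feasible S zs vs th j t z u \<longleftrightarrow>
     (\<forall>d < sN S. cstr S (t + d) (pred S (th j) z t u d) (u (t + d)))
     \<and> pred S (th j) z t u (sN S) \<in> SS S zs vs th j (t + sN S)"

definition lmpc_cost :: "('n::finite, 'm::finite, 'd::finite, 'c::finite, 'p) lmpc_sys \<Rightarrow> (nat \<Rightarrow> nat \<Rightarrow> real^'n) \<Rightarrow> (nat \<Rightarrow> nat \<Rightarrow> real^'m) \<Rightarrow> (nat \<Rightarrow> 'p) \<Rightarrow> nat \<Rightarrow> nat \<Rightarrow> real^'n \<Rightarrow> (nat \<Rightarrow> real^'m) \<Rightarrow> ereal" where
  "lmpc_cost S zs vs th j t z u =
     ereal (\<Sum>d < sN S. sl S (t + d) (pred S (th j) z t u d) (u (t + d)))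
     + Qf S zs vs th j (t + sN S) (pred S (th j) z t u (sN S))"

definition lmpc_optimal :: "('n::finite, 'm::finite, 'd::finite, 'c::finite, 'p) lmpc_sys \<Rightarrow> (nat \<Rightarrow> nat \<Rightarrow> real^'n) \<Rightarrow> (nat \<Rightarrow> nat \<Rightarrow> real^'m) \<Rightarrow> (nat \<Rightarrow> 'p) \<Rightarrow> nat \<Rightarrow> nat \<Rightarrow> real^'n \<Rightarrow> (nat \<Rightarrow> real^'m) \<Rightarrow> bool" where
  "lmpc_optimal S zs vs th j t z u \<longleftrightarrow>
     lmpc_feasible S zs vs th j t z u
     \<and> (\<forall>u'. lmpc_feasible S zs vs th j t z u' \<longrightarrow> lmpc_cost S zs vs th j t z u \<le> lmpc_cost S zs vs th j t z u')"

definition Jcl :: "('n::finite, 'm::finite, 'd::finite, 'c::finite, 'p) lmpc_sys \<Rightarrow> (nat \<Rightarrow> nat \<Rightarrow> real^'n) \<Rightarrow> (nat \<Rightarrow> nat \<Rightarrow> real^'m) \<Rightarrow> nat \<Rightarrow> nat \<Rightarrow> real" where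
  "Jcl S zs vs j t = (\<Sum>k = t..sT S. sl S k (zs j k) (vs j k))"

end

theory Submission
  imports Defs
begin


lemma shz_step:
  assumes "zi (Suc k) = dyn S thi k (zi k) (vi k)" "t \<le> k"
  shows "shz S zi thi th t (Suc k) = dyn S th k (shz S zi thi th t k) (shv S vi thi th t k)"
proof -
  have e1: "Suc k - t = Suc (k - t)" and e2: "t + (k - t) = k" using assms(2) by auto
  show ?thesis
    using assms(1)
    by (simp add: shz_def shv_def dyn_def Phi_def e1 e2 matrix_vector_mult_add_rdistrib
        matrix_vector_right_distrib matrix_vector_mul_assoc matrix_vector_mult_diff_distrib algebra_simps)
qed

lemma pred_shift_traj:
  assumes "\<And>k. k < T \<Longrightarrow> zi (Suc k) = dyn S thi k (zi k) (vi k)" "t' \<le> t"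
  shows "t + d \<le> T \<Longrightarrow> pred S th (shz S zi thi th t' t) t (shv S vi thi th t') d = shz S zi thi th t' (t + d)"
proof (induction d)
  case 0
  then show ?case by simp
next
  case (Suc d)
  then have "pred S th (shz S zi thi th t' t) t (shv S vi thi th t') (Suc d)
     = dyn S th (t + d) (shz S zi thi th t' (t + d)) (shv S vi thi th t' (t + d))" by simp
  also have "\<dots> = shz S zi thi th t' (Suc (t + d))"
    using shz_step[of zi "t + d" S thi vi t' th] assms Suc.prems by simp
  finally show ?case by simp
qed

lemma sum_split:
  fixes f :: "nat \<Rightarrow> real"
  shows "t + N \<le> Suc T \<Longrightarrow> (\<Sum>d<N. f (t + d)) + (\<Sum>k = t + N..T. f k) = (\<Sum>k = t..T. f k)"
proof (induction N)
  case 0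
  then show ?case by simp
next
  case (Suc N)
  have "(\<Sum>k = t + N..T. f k) = f (t + N) + (\<Sum>k = Suc (t + N)..T. f k)"
    using Suc.prems by (intro sum.atLeast_Suc_atMost) simp
  then show ?case using Suc by simp
qed

lemma Qf_le:
  assumes "i < j" "t' \<le> k" "th j \<in> Wfeas S (zs i) (vs i) (th i) t'" "shz S (zs i) (th i) (th j) t' k = z"
  shows "Qf S zs vs th j k z \<le> ereal (Jsh S zs vs th i j t' k)"
  unfolding Qf_def
  by (rule INF_lower2[of "(i, t')"]) (use assms in auto)

lemma Qf_attain:
  assumes "z \<in> SS S zs vs th j k"
  shows "\<exists>i t'. i < j \<and> t' \<le> k \<and> th j \<in> Wfeas S (zs i) (vs i) (th i) t'
    \<and> shz S (zs i) (th i) (th j) t' k = z \<and> Qf S zs vs th j k z = ereal (Jsh S zs vs th i j t' k)"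
proof -
  define P where "P = {(i, t). i < j \<and> t \<le> k \<and> th j \<in> Wfeas S (zs i) (vs i) (th i) t
                        \<and> shz S (zs i) (th i) (th j) t k = z}"
  define g where "g = (\<lambda>p. ereal (Jsh S zs vs th (fst p) j (snd p) k))"
  have fin: "finite P" unfolding P_def
    by (rule finite_subset[of _ "{..<j} \<times> {..k}"]) auto
  have ne: "P \<noteq> {}" using assms unfolding SS_def P_def by auto
  have "Qf S zs vs th j k z = Inf (g ` P)" unfolding Qf_def P_def g_def by simp
  also have "\<dots> = Min (g ` P)" using fin ne by (intro cInf_eq_Min) auto
  finally have q: "Qf S zs vs th j k z = Min (g ` P)" .
  have "Min (g ` P) \<in> g ` P" using fin ne by (intro Min_in) auto
  then obtain p where "p \<in> P" "Min (g ` P) = g p" by auto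
  then show ?thesis using q unfolding P_def g_def by (cases p) auto
qed

theorem theorem2:
  fixes S :: "('n::finite, 'm::finite, 'd::finite, 'c::finite, 'p) lmpc_sys"
    and W\<theta> :: "'p set"
    and zs :: "nat \<Rightarrow> nat \<Rightarrow> real^'n"
    and vs :: "nat \<Rightarrow> nat \<Rightarrow> real^'m"
    and th :: "nat \<Rightarrow> 'p"
    and vopt :: "nat \<Rightarrow> nat \<Rightarrow> nat \<Rightarrow> real^'m"
  assumes horizon: "1 \<le> sN S" "sN S \<le> sT S"
    and cost_cont: "\<And>k. k \<le> sT S \<Longrightarrow> continuous_on UNIV (\<lambda>p. sl S k (fst p) (snd p))"
    and cost_convex: "\<And>k. k \<le> sT S \<Longrightarrow> convex_on UNIV (\<lambda>p. sl S k (fst p) (snd p))"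
    and cost_nonneg: "\<And>k z v. k \<le> sT S \<Longrightarrow> sl S k z v \<ge> 0"
    and params: "\<And>j. th j \<in> W\<theta>"
    and it0_init: "zs 0 0 = sxs S"
    and it0_dyn: "\<And>k. k < sT S \<Longrightarrow> zs 0 (Suc k) = dyn S (th 0) k (zs 0 k) (vs 0 k)"
    and it0_cstr: "\<And>k. k \<le> sT S \<Longrightarrow> cstr S k (zs 0 k) (vs 0 k)"
    and it0_W: "\<And>t. t \<le> sT S \<Longrightarrow> W\<theta> \<subseteq> Wfeas S (zs 0) (vs 0) (th 0) t"
    and cl_init: "\<And>j. 1 \<le> j \<Longrightarrow> zs j 0 = sxs S"
    and cl_dyn: "\<And>j k. 1 \<le> j \<Longrightarrow> k < sT S \<Longrightarrow> zs j (Suc k) = dyn S (th j) k (zs j k) (vs j k)"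
    and cl_opt: "\<And>j t. 1 \<le> j \<Longrightarrow> t \<le> sT S - sN S \<Longrightarrow> lmpc_optimal S zs vs th j t (zs j t) (vopt j t)"
    and cl_input: "\<And>j t. 1 \<le> j \<Longrightarrow> t < sT S \<Longrightarrow>
        vs j t = (if t + sN S \<le> sT S then vopt j t t else vopt j (sT S - sN S) t)"
    and cl_terminal: "\<And>j. 1 \<le> j \<Longrightarrow> \<exists>i t'. i < j \<and> t' \<le> sT S
        \<and> th j \<in> Wfeas S (zs i) (vs i) (th i) t'
        \<and> shz S (zs i) (th i) (th j) t' (sT S) = zs j (sT S)
        \<and> vs j (sT S) = shv S (vs i) (th i) (th j) t' (sT S)
        \<and> ereal (Jsh S zs vs th i j t' (sT S)) = Qf S zs vs th j (sT S) (zs j (sT S))"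
  shows "(\<forall>j t i t'. 1 \<le> j \<longrightarrow> t \<le> sT S - sN S \<longrightarrow> i < j \<longrightarrow> t' \<le> t
            \<longrightarrow> th j \<in> Wfeas S (zs i) (vs i) (th i) t'
            \<longrightarrow> shz S (zs i) (th i) (th j) t' t = zs j t
            \<longrightarrow> Jcl S zs vs j t \<le> Jsh S zs vs th i j t' t)
       \<and> (\<forall>j i. 1 \<le> j \<longrightarrow> i < j \<longrightarrow> th j \<in> Wfeas S (zs i) (vs i) (th i) 0
            \<longrightarrow> Jcl S zs vs j 0 \<le> Jsh S zs vs th i j 0 0)"
  
proof -
  define T where "T = sT S"
  define N where "N = sN S"
  define M where "M = T - N"
  have MN: "M + N = T" using horizon unfolding M_def T_def N_def by simp
  have traj: "\<And>i k. k < T \<Longrightarrow> zs i (Suc k) = dyn S (th i) k (zs i k) (vs i k)"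
  proof -
    fix i k assume "k < T"
    then show "zs i (Suc k) = dyn S (th i) k (zs i k) (vs i k)"
      using it0_dyn cl_dyn[of i k] unfolding T_def by (cases i) auto
  qed
  have init: "\<And>i. zs i 0 = sxs S"
    using it0_init cl_init by (metis One_nat_def Suc_leI not_gr_zero)
  let ?L = "sl S"
  have part1: "lmpc_cost S zs vs th j t (zs j t) (vopt j t) \<le> ereal (Jsh S zs vs th i j t' t)"
    if j: "1 \<le> j" and t: "t \<le> M" and ij: "i < j" and tt: "t' \<le> t"
      and W: "th j \<in> Wfeas S (zs i) (vs i) (th i) t'"
      and zz: "shz S (zs i) (th i) (th j) t' t = zs j t" for j t i t'
  proof -
    define u where "u = shv S (vs i) (th i) (th j) t'"
    have pr: "pred S (th j) (zs j t) t u d = shz S (zs i) (th i) (th j) t' (t + d)" if "d \<le> N" for d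
      using pred_shift_traj[of T "zs i" S "th i" "vs i" t' t d "th j", OF traj tt] that t MN zz
      unfolding u_def by simp
    have feas: "lmpc_feasible S zs vs th j t (zs j t) u"
      unfolding lmpc_feasible_def
    proof (intro conjI allI impI)
      fix d assume d: "d < sN S"
      then show "cstr S (t + d) (pred S (th j) (zs j t) t u d) (u (t + d))"
        using pr[of d] W t tt MN unfolding Wfeas_def u_def N_def T_def by auto
    next
      show "pred S (th j) (zs j t) t u (sN S) \<in> SS S zs vs th j (t + sN S)"
        using pr[of N] W ij tt unfolding SS_def N_def by fastforce
    qed
    have "lmpc_cost S zs vs th j t (zs j t) (vopt j t) \<le> lmpc_cost S zs vs th j t (zs j t) u"
      using cl_opt[OF j, of t] feas t unfolding lmpc_optimal_def M_def T_def N_def by auto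
    also have "\<dots> = ereal (\<Sum>d<N. ?L (t + d) (shz S (zs i) (th i) (th j) t' (t + d)) (u (t + d)))
        + Qf S zs vs th j (t + N) (shz S (zs i) (th i) (th j) t' (t + N))"
      unfolding lmpc_cost_def N_def[symmetric] using pr by simp
    also have "\<dots> \<le> ereal (\<Sum>d<N. ?L (t + d) (shz S (zs i) (th i) (th j) t' (t + d)) (u (t + d)))
        + ereal (Jsh S zs vs th i j t' (t + N))"
      by (intro add_left_mono Qf_le) (use ij tt W in auto)
    also have "\<dots> = ereal (Jsh S zs vs th i j t' t)"
      using sum_split[of t N T "\<lambda>r. ?L r (shz S (zs i) (th i) (th j) t' r) (u r)"] t MN
      unfolding Jsh_def u_def T_def by simp
    finally show ?thesis .
  qed
  have part2: "ereal (Jcl S zs vs j t) \<le> lmpc_cost S zs vs th j t (zs j t) (vopt j t)"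
    if j: "1 \<le> j" and t: "t \<le> M" for j t
  proof -
    have "ereal (Jcl S zs vs j (M - d)) \<le> lmpc_cost S zs vs th j (M - d) (zs j (M - d)) (vopt j (M - d))"
      if "d \<le> M" for d
      using that
    proof (induction d)
      case 0
      have vsM: "vs j (M + d) = vopt j M (M + d)" if "d < N" for d
        using cl_input[OF j, of "M + d"] that MN unfolding T_def N_def by (cases "d = 0") (auto simp: M_def T_def N_def)
      have zM: "zs j (M + d) = pred S (th j) (zs j M) M (vopt j M) d" if "d \<le> N" for d
        using that
      proof (induction d)
        case 0 then show ?case by simp
      next
        case (Suc d)
        have "zs j (M + Suc d) = dyn S (th j) (M + d) (zs j (M + d)) (vs j (M + d))"
          using traj[of "M + d" j] Suc.prems MN by simp
        then show ?case using Suc vsM[of d] by simp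
      qed
      obtain i t' where it: "i < j" "t' \<le> sT S" "th j \<in> Wfeas S (zs i) (vs i) (th i) t'"
        "shz S (zs i) (th i) (th j) t' (sT S) = zs j (sT S)"
        "vs j (sT S) = shv S (vs i) (th i) (th j) t' (sT S)"
        "ereal (Jsh S zs vs th i j t' (sT S)) = Qf S zs vs th j (sT S) (zs j (sT S))"
        using cl_terminal[OF j] by blast
      have QT: "Qf S zs vs th j T (zs j T) = ereal (?L T (zs j T) (vs j T))"
        using it unfolding Jsh_def T_def by simp
      have "lmpc_cost S zs vs th j M (zs j M) (vopt j M)
          = ereal (\<Sum>d<N. ?L (M + d) (zs j (M + d)) (vs j (M + d))) + Qf S zs vs th j T (zs j T)"
      proof -
        have sumeq: "(\<Sum>d<N. ?L (M + d) (pred S (th j) (zs j M) M (vopt j M) d) (vopt j M (M + d)))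
            = (\<Sum>d<N. ?L (M + d) (zs j (M + d)) (vs j (M + d)))"
          by (intro sum.cong refl) (simp add: zM vsM less_imp_le)
        have zT: "pred S (th j) (zs j M) M (vopt j M) N = zs j T" using zM[of N] MN by simp
        show ?thesis by (simp only: lmpc_cost_def N_def[symmetric] MN sumeq zT)
      qed
      also have "\<dots> = ereal (Jcl S zs vs j M)"
        using QT sum_split[of M N T "\<lambda>k. ?L k (zs j k) (vs j k)"] MN unfolding Jcl_def T_def
        by simp
      finally show ?case by simp
    next
      case (Suc d)
      define t where "t = M - Suc d"
      have tM: "t < M" and St: "Suc t = M - d" using Suc.prems unfolding t_def by auto
      have IH: "ereal (Jcl S zs vs j (Suc t)) \<le> lmpc_cost S zs vs th j (Suc t) (zs j (Suc t)) (vopt j (Suc t))"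
        using Suc St by simp
      define p where "p = pred S (th j) (zs j t) t (vopt j t)"
      have optt: "lmpc_optimal S zs vs th j t (zs j t) (vopt j t)"
        using cl_opt[OF j, of t] tM unfolding M_def T_def N_def by simp
      then have feast: "\<And>d. d < N \<Longrightarrow> cstr S (t + d) (p d) (vopt j t (t + d))"
        and termt: "p N \<in> SS S zs vs th j (t + N)"
        unfolding lmpc_optimal_def lmpc_feasible_def p_def N_def by auto
      obtain i0 t0 where it0: "i0 < j" "t0 \<le> t + N" "th j \<in> Wfeas S (zs i0) (vs i0) (th i0) t0"
        "shz S (zs i0) (th i0) (th j) t0 (t + N) = p N"
        "Qf S zs vs th j (t + N) (p N) = ereal (Jsh S zs vs th i0 j t0 (t + N))"
        using Qf_attain[OF termt] by blast
      obtain N' where NN: "N = Suc N'" using horizon unfolding N_def by (cases "sN S") auto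
      let ?z = "shz S (zs i0) (th i0) (th j) t0"
      let ?v = "shv S (vs i0) (th i0) (th j) t0"
      define u' where "u' = (\<lambda>k. if k < t + N then vopt j t k else ?v k)"
      have tNT: "t + N < T" using tM MN by simp
      have vst: "vs j t = vopt j t t"
        using cl_input[OF j, of t] tNT unfolding T_def N_def by simp
      define p' where "p' = pred S (th j) (zs j (Suc t)) (Suc t) u'"
      have pp: "p' d = p (Suc d)" if "d \<le> N'" for d
        using that
      proof (induction d)
        case 0
        have "zs j (Suc t) = dyn S (th j) t (zs j t) (vs j t)" using traj[of t j] tNT by simp
        then show ?case unfolding p'_def p_def using vst by simp
      next
        case (Suc d)
        have "p' (Suc d) = dyn S (th j) (Suc t + d) (p' d) (u' (Suc t + d))" unfolding p'_def by simp
        also have "\<dots> = dyn S (th j) (t + Suc d) (p (Suc d)) (vopt j t (t + Suc d))"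
          using Suc NN unfolding u'_def by simp
        also have "\<dots> = p (Suc (Suc d))" unfolding p_def by simp
        finally show ?case .
      qed
      have pN: "p' N = ?z (Suc (t + N))"
      proof -
        have "p' N = dyn S (th j) (t + N) (p' N') (u' (t + N))" unfolding p'_def NN by simp
        also have "\<dots> = dyn S (th j) (t + N) (?z (t + N)) (?v (t + N))"
          using pp[of N'] it0(4) NN unfolding u'_def by simp
        also have "\<dots> = ?z (Suc (t + N))"
          using shz_step[of "zs i0" "t + N" S "th i0" "vs i0" t0 "th j"] traj[of "t + N" i0] tNT it0(2)
          by simp
        finally show ?thesis .
      qed
      have feas': "lmpc_feasible S zs vs th j (Suc t) (zs j (Suc t)) u'"
        unfolding lmpc_feasible_def
      proof (intro conjI allI impI)
        fix d assume d: "d < sN S"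
        show "cstr S (Suc t + d) (pred S (th j) (zs j (Suc t)) (Suc t) u' d) (u' (Suc t + d))"
        proof (cases "d < N'")
          case True
          then show ?thesis using pp[of d] feast[of "Suc d"] NN unfolding p'_def u'_def by simp
        next
          case False
          then have dN: "d = N'" using d NN unfolding N_def by simp
          have "cstr S (t + N) (?z (t + N)) (?v (t + N))"
            using it0(2,3) tNT unfolding Wfeas_def T_def by auto
          then show ?thesis using pp[of N'] it0(4) dN NN unfolding p'_def u'_def by simp
        qed
      next
        show "pred S (th j) (zs j (Suc t)) (Suc t) u' (sN S) \<in> SS S zs vs th j (Suc t + sN S)"
          using pN it0(1,2,3) unfolding p'_def N_def SS_def by fastforce
      qed
      have "lmpc_cost S zs vs th j (Suc t) (zs j (Suc t)) (vopt j (Suc t))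
          \<le> lmpc_cost S zs vs th j (Suc t) (zs j (Suc t)) u'"
        using cl_opt[OF j, of "Suc t"] feas' tM unfolding lmpc_optimal_def M_def T_def N_def by auto
      also have "\<dots> = ereal (\<Sum>d<N. ?L (Suc t + d) (p' d) (u' (Suc t + d))) + Qf S zs vs th j (Suc (t + N)) (?z (Suc (t + N)))"
        unfolding lmpc_cost_def N_def[symmetric] p'_def[symmetric] pN by simp
      also have "\<dots> \<le> ereal (\<Sum>d<N. ?L (Suc t + d) (p' d) (u' (Suc t + d))) + ereal (Jsh S zs vs th i0 j t0 (Suc (t + N)))"
        by (intro add_left_mono Qf_le) (use it0 in auto)
      also have "\<dots> = ereal ((\<Sum>d<N. ?L (Suc t + d) (p' d) (u' (Suc t + d))) + Jsh S zs vs th i0 j t0 (Suc (t + N)))"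
        by simp
      finally have c1: "ereal (Jcl S zs vs j (Suc t)) \<le> ereal ((\<Sum>d<N. ?L (Suc t + d) (p' d) (u' (Suc t + d))) + Jsh S zs vs th i0 j t0 (Suc (t + N)))"
        using IH by (rule order_trans[rotated])
      have s1: "(\<Sum>d<N. ?L (Suc t + d) (p' d) (u' (Suc t + d)))
          = (\<Sum>d<N'. ?L (t + Suc d) (p (Suc d)) (vopt j t (t + Suc d))) + ?L (t + N) (?z (t + N)) (?v (t + N))"
      proof -
        have "(\<Sum>d<N'. ?L (Suc t + d) (p' d) (u' (Suc t + d))) = (\<Sum>d<N'. ?L (t + Suc d) (p (Suc d)) (vopt j t (t + Suc d)))"
          by (intro sum.cong refl) (simp add: pp NN u'_def)
        moreover have "?L (Suc t + N') (p' N') (u' (Suc t + N')) = ?L (t + N) (?z (t + N)) (?v (t + N))"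
          using pp[of N'] it0(4) NN unfolding u'_def by simp
        ultimately show ?thesis using NN by simp
      qed
      have s2: "Jsh S zs vs th i0 j t0 (t + N) = ?L (t + N) (?z (t + N)) (?v (t + N)) + Jsh S zs vs th i0 j t0 (Suc (t + N))"
        unfolding Jsh_def using tNT unfolding T_def by (intro sum.atLeast_Suc_atMost) simp
      have s3: "(\<Sum>d<N. ?L (t + d) (p d) (vopt j t (t + d)))
          = ?L t (zs j t) (vs j t) + (\<Sum>d<N'. ?L (t + Suc d) (p (Suc d)) (vopt j t (t + Suc d)))"
        unfolding NN sum.lessThan_Suc_shift using vst unfolding p_def by simp
      have s4: "Jcl S zs vs j t = ?L t (zs j t) (vs j t) + Jcl S zs vs j (Suc t)"
        unfolding Jcl_def using tNT unfolding T_def by (intro sum.atLeast_Suc_atMost) simp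
      have "lmpc_cost S zs vs th j t (zs j t) (vopt j t)
          = ereal ((\<Sum>d<N. ?L (t + d) (p d) (vopt j t (t + d))) + Jsh S zs vs th i0 j t0 (t + N))"
        unfolding lmpc_cost_def N_def[symmetric] p_def[symmetric] it0(5) by simp
      moreover have "ereal (Jcl S zs vs j t) \<le> ereal ((\<Sum>d<N. ?L (t + d) (p d) (vopt j t (t + d))) + Jsh S zs vs th i0 j t0 (t + N))"
        using c1 s1 s2 s3 s4 by simp
      ultimately have "ereal (Jcl S zs vs j t) \<le> lmpc_cost S zs vs th j t (zs j t) (vopt j t)" by simp
      then show ?case unfolding t_def .
    qed
    from this[of "M - t"] t show ?thesis by simp
  qed
  have main: "Jcl S zs vs j t \<le> Jsh S zs vs th i j t' t"
    if "1 \<le> j" "t \<le> M" "i < j" "t' \<le> t" "th j \<in> Wfeas S (zs i) (vs i) (th i) t'"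
       "shz S (zs i) (th i) (th j) t' t = zs j t" for j t i t'
  proof -
    have "ereal (Jcl S zs vs j t) \<le> ereal (Jsh S zs vs th i j t' t)"
      using part1[OF that] part2[OF that(1,2)] by (rule order_trans[rotated])
    then show ?thesis by simp
  qed
  show ?thesis
  proof (intro conjI allI impI)
    fix j t i t'
    assume "1 \<le> j" "t \<le> sT S - sN S" "i < j" "t' \<le> t" "th j \<in> Wfeas S (zs i) (vs i) (th i) t'"
       "shz S (zs i) (th i) (th j) t' t = zs j t"
    then show "Jcl S zs vs j t \<le> Jsh S zs vs th i j t' t"
      using main unfolding M_def T_def N_def by blast
  next
    fix j i
    assume a: "1 \<le> j" "i < j" "th j \<in> Wfeas S (zs i) (vs i) (th i) 0"
    have "shz S (zs i) (th i) (th j) 0 0 = zs j 0" using init unfolding shz_def by simp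
    then show "Jcl S zs vs j 0 \<le> Jsh S zs vs th i j 0 0" using main[of j 0 i 0] a by simp
  qed
qed

end
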